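(* Let $\theta>0$, $\lambda>0$, $\mu>0$ with $\lambda<\mu+1$. For $\alpha\ge 0$, $d\ge 0$ let $$\pi(\alpha,d)=(\theta+\mu)\alpha-\frac{\alpha^2}{2}-\frac{\alpha}{\alpha+d}\,\lambda\alpha\theta-d ,$$ and for $\alpha>0$ let $\Pi(\alpha;\theta)=\max_{d\ge 0}\pi(\alpha,d)$. Then the optimal deployment $\alpha^*(\theta)$ maximizing $\Pi(\cdot;\theta)$ is $$\alpha^*(\theta)=\begin{cases}\mu+\theta(1-\lambda), & \lambda\theta\le 1,\\ \theta+\mu+1-2\sqrt{\lambda\theta}, & \lambda\theta>1,\end{cases}$$ with $\alpha^*(\theta)>0$ for all $\theta>0$. The two expressions coincide at $\theta=1/\lambda$.
   Context: $\alpha$ is AI deployment, $d$ security investment, $\theta$ AI capability, $\lambda$ conditional breach-loss magnitude, $\mu$ complementary organizational readiness. Breach probability is $p(\alpha,d)=\alpha/(\alpha+d)$ and breach damage is $\lambda\alpha\theta$. *)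

theory Defs
  imports Complex_Main
begin

definition profit :: "real \<Rightarrow> real \<Rightarrow> real \<Rightarrow> real \<Rightarrow> real \<Rightarrow> real" where
  "profit \<theta> lam \<mu> \<alpha> d =
     (\<theta> + \<mu>) * \<alpha> - \<alpha>^2 / 2 - (\<alpha> / (\<alpha> + d)) * (lam * \<alpha> * \<theta>) - d"

definition Profit :: "real \<Rightarrow> real \<Rightarrow> real \<Rightarrow> real \<Rightarrow> real" where
  "Profit \<theta> lam \<mu> \<alpha> = (SUP d\<in>{0..}. profit \<theta> lam \<mu> \<alpha> d)"

definition alpha_star :: "real \<Rightarrow> real \<Rightarrow> real \<Rightarrow> real" where
  "alpha_star \<theta> lam \<mu> =
     (if lam * \<theta> \<le> 1 then \<mu> + \<theta> * (1 - lam)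
      else \<theta> + \<mu> + 1 - 2 * sqrt (lam * \<theta>))"

end

theory Submission
  imports Defs
begin

lemma case_le:
  fixes \<theta> lam \<mu> \<alpha> d :: real
  assumes "\<alpha> > 0" "d \<ge> 0" "lam * \<theta> \<le> 1" "lam > 0" "\<theta> > 0"
  shows "profit \<theta> lam \<mu> \<alpha> d \<le> (\<theta> + \<mu> - lam * \<theta>) * \<alpha> - \<alpha>^2/2"
    and "profit \<theta> lam \<mu> \<alpha> 0 = (\<theta> + \<mu> - lam * \<theta>) * \<alpha> - \<alpha>^2/2"
proof -
  have ad: "\<alpha> + d > 0" using assms by simp
  have "d * (\<alpha> + d - lam * \<theta> * \<alpha>) \<ge> 0"
  proof -
    have "lam * \<theta> * \<alpha> \<le> \<alpha>" using assms mult_right_mono[of "lam*\<theta>" 1 \<alpha>] by simp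
    hence "\<alpha> + d - lam * \<theta> * \<alpha> \<ge> 0" using assms(2) by linarith
    thus ?thesis using assms(2) by (metis mult_nonneg_nonneg)
  qed
  hence "lam * \<theta> * \<alpha> * (\<alpha> + d) \<le> \<alpha>^2 * lam * \<theta> + d * (\<alpha> + d)"
    by (simp add: algebra_simps power2_eq_square)
  hence "lam * \<theta> * \<alpha> \<le> (\<alpha>^2 * lam * \<theta> + d * (\<alpha> + d)) / (\<alpha> + d)"
    using ad by (simp add: field_simps)
  also have "\<dots> = \<alpha> / (\<alpha> + d) * (lam * \<alpha> * \<theta>) + d"
    using ad by (simp add: field_simps power2_eq_square)
  finally show "profit \<theta> lam \<mu> \<alpha> d \<le> (\<theta> + \<mu> - lam * \<theta>) * \<alpha> - \<alpha>^2/2"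
    unfolding profit_def by (simp add: algebra_simps)
  show "profit \<theta> lam \<mu> \<alpha> 0 = (\<theta> + \<mu> - lam * \<theta>) * \<alpha> - \<alpha>^2/2"
    using assms unfolding profit_def by (simp add: algebra_simps)
qed

lemma case_gt:
  fixes \<theta> lam \<mu> \<alpha> d :: real
  assumes "\<alpha> > 0" "d \<ge> 0" "lam * \<theta> > 1"
  shows "profit \<theta> lam \<mu> \<alpha> d \<le> (\<theta> + \<mu> + 1 - 2 * sqrt (lam * \<theta>)) * \<alpha> - \<alpha>^2/2"
    and "profit \<theta> lam \<mu> \<alpha> (\<alpha> * (sqrt (lam * \<theta>) - 1)) = (\<theta> + \<mu> + 1 - 2 * sqrt (lam * \<theta>)) * \<alpha> - \<alpha>^2/2"
proof -
  define s where "s = sqrt (lam * \<theta>)"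
  have s2: "s^2 = lam * \<theta>" using assms s_def by simp
  have s1: "s > 1" using assms s_def by (simp add: real_less_rsqrt)
  have ad: "\<alpha> + d > 0" using assms by simp
  have "(\<alpha> + d - s * \<alpha>)^2 \<ge> 0" by simp
  hence "2 * s * \<alpha> * (\<alpha> + d) \<le> (\<alpha> + d)^2 + s^2 * \<alpha>^2"
    by (simp add: algebra_simps power2_eq_square)
  hence "2 * s * \<alpha> \<le> ((\<alpha> + d)^2 + s^2 * \<alpha>^2) / (\<alpha> + d)"
    using ad by (simp add: field_simps)
  also have "\<dots> = \<alpha> / (\<alpha> + d) * (lam * \<alpha> * \<theta>) + d + \<alpha>"
    using ad s2 by (simp add: field_simps power2_eq_square)
  finally show "profit \<theta> lam \<mu> \<alpha> d \<le> (\<theta> + \<mu> + 1 - 2 * sqrt (lam * \<theta>)) * \<alpha> - \<alpha>^2/2"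
    unfolding profit_def s_def[symmetric] by (simp add: algebra_simps)
  have e: "\<alpha> + \<alpha> * (s - 1) = \<alpha> * s" by (simp add: algebra_simps)
  have "\<alpha> / (\<alpha> * s) * (lam * \<alpha> * \<theta>) = \<alpha> * (lam * \<theta>) / s"
    using s1 assms by (simp add: field_simps)
  also have "\<dots> = \<alpha> * s" using s1 s2 by (simp add: field_simps power2_eq_square)
  finally have "\<alpha> / (\<alpha> * s) * (lam * \<alpha> * \<theta>) = \<alpha> * s" .
  thus "profit \<theta> lam \<mu> \<alpha> (\<alpha> * (sqrt (lam * \<theta>) - 1)) = (\<theta> + \<mu> + 1 - 2 * sqrt (lam * \<theta>)) * \<alpha> - \<alpha>^2/2"
    unfolding profit_def s_def[symmetric] e by (simp only:) (simp add: algebra_simps)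
qed

lemma main:
  fixes \<theta> lam \<mu> :: real
  assumes "\<theta> > 0" and "lam > 0"
  defines "A \<equiv> alpha_star \<theta> lam \<mu>"
  shows "\<forall>\<alpha>>0. \<exists>d\<ge>0. profit \<theta> lam \<mu> \<alpha> d = A * \<alpha> - \<alpha>^2/2
          \<and> (\<forall>d'\<ge>0. profit \<theta> lam \<mu> \<alpha> d' \<le> A * \<alpha> - \<alpha>^2/2)"
proof (intro allI impI)
  fix \<alpha> :: real assume a: "\<alpha> > 0"
  show "\<exists>d\<ge>0. profit \<theta> lam \<mu> \<alpha> d = A * \<alpha> - \<alpha>^2/2
          \<and> (\<forall>d'\<ge>0. profit \<theta> lam \<mu> \<alpha> d' \<le> A * \<alpha> - \<alpha>^2/2)"
  proof (cases "lam * \<theta> \<le> 1")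
    case True
    have "A = \<theta> + \<mu> - lam * \<theta>" using True unfolding A_def alpha_star_def by (simp add: algebra_simps)
    thus ?thesis using case_le[OF a _ True assms(2) assms(1)] by (intro exI[of _ 0]) auto
  next
    case False
    hence F: "lam * \<theta> > 1" by simp
    have "A = \<theta> + \<mu> + 1 - 2 * sqrt (lam * \<theta>)" using False unfolding A_def alpha_star_def by simp
    moreover have "sqrt (lam * \<theta>) \<ge> 1" using F by simp
    ultimately show ?thesis using case_gt[OF a _ F] a
      by (intro exI[of _ "\<alpha> * (sqrt (lam * \<theta>) - 1)"]) auto
  qed
qed

lemma Profit_eq:
  fixes \<theta> lam \<mu> :: real
  assumes "\<theta> > 0" and "lam > 0" "\<alpha> > 0"
  shows "Profit \<theta> lam \<mu> \<alpha> = alpha_star \<theta> lam \<mu> * \<alpha> - \<alpha>^2/2"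
    and "\<exists>d\<ge>0. Profit \<theta> lam \<mu> \<alpha> = profit \<theta> lam \<mu> \<alpha> d
                      \<and> (\<forall>d'\<ge>0. profit \<theta> lam \<mu> \<alpha> d' \<le> profit \<theta> lam \<mu> \<alpha> d)"
proof -
  obtain d where d: "d \<ge> 0" "profit \<theta> lam \<mu> \<alpha> d = alpha_star \<theta> lam \<mu> * \<alpha> - \<alpha>^2/2"
    "\<forall>d'\<ge>0. profit \<theta> lam \<mu> \<alpha> d' \<le> alpha_star \<theta> lam \<mu> * \<alpha> - \<alpha>^2/2"
    using main[OF assms(1,2)] assms(3) by blast
  have "Profit \<theta> lam \<mu> \<alpha> = alpha_star \<theta> lam \<mu> * \<alpha> - \<alpha>^2/2"
    unfolding Profit_def
    by (rule cSup_eq_maximum) (use d in \<open>auto intro: rev_image_eqI[of d]\<close>)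
  thus "Profit \<theta> lam \<mu> \<alpha> = alpha_star \<theta> lam \<mu> * \<alpha> - \<alpha>^2/2" .
  show "\<exists>d\<ge>0. Profit \<theta> lam \<mu> \<alpha> = profit \<theta> lam \<mu> \<alpha> d
                      \<and> (\<forall>d'\<ge>0. profit \<theta> lam \<mu> \<alpha> d' \<le> profit \<theta> lam \<mu> \<alpha> d)"
    using d \<open>Profit \<theta> lam \<mu> \<alpha> = _\<close> by auto
qed

lemma pos:
  fixes \<theta> lam \<mu> :: real
  assumes "\<theta> > 0" and "lam > 0" and "\<mu> > 0" and "lam < \<mu> + 1"
  shows "alpha_star \<theta> lam \<mu> > 0"
proof (cases "lam * \<theta> \<le> 1")
  case True
  show ?thesis
  proof (cases "lam \<le> 1")
    case True
    have "\<theta> * (1 - lam) \<ge> 0" using True assms by simp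
    thus ?thesis using \<open>lam * \<theta> \<le> 1\<close> assms unfolding alpha_star_def
      by simp
  next
    case False
    have "\<theta> * (lam - 1) \<le> \<theta> * lam" using assms by simp
    also have "\<dots> \<le> 1" using True by (simp add: mult.commute)
    also have "1 < lam" using False by simp
    also have "lam < \<mu> + 1" by fact
    finally have h: "\<theta> * (lam - 1) < \<mu> + 1" .
    have "\<theta> * (lam - 1) < \<mu>"
    proof -
      have "\<theta> * lam \<le> 1" using True by (simp add: mult.commute)
      hence "\<theta> * (lam - 1) \<le> 1 - \<theta>" by (simp add: algebra_simps)
      have "(\<theta> * lam) * (lam - 1) \<le> 1 * (lam - 1)"
        using \<open>\<theta> * lam \<le> 1\<close> False by (intro mult_right_mono) auto
      hence a1: "\<theta> * (lam - 1) * lam \<le> lam - 1" by (simp add: algebra_simps)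
      have "\<mu> * 1 < \<mu> * lam" using assms(3) False by (intro mult_strict_left_mono) auto
      hence "\<theta> * (lam - 1) * lam < \<mu> * lam" using a1 assms(4) by linarith
      thus ?thesis using assms(2) by (simp add: mult_less_cancel_right_pos)
    qed
    thus ?thesis using True unfolding alpha_star_def by (simp add: algebra_simps)
  qed
next
  case False
  have sq: "sqrt (lam * \<theta>) = sqrt lam * sqrt \<theta>" by (simp add: real_sqrt_mult)
  have "0 \<le> (sqrt lam - sqrt \<theta>)^2" by simp
  also have "\<dots> = lam + \<theta> - 2 * (sqrt lam * sqrt \<theta>)"
    using assms by (simp add: power2_diff)
  finally have "2 * sqrt (lam * \<theta>) \<le> lam + \<theta>" unfolding sq by simp
  thus ?thesis using False assms unfolding alpha_star_def by simp
qed

theorem proposition1: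
  fixes \<theta> lam \<mu> :: real
  assumes "\<theta> > 0" and "lam > 0" and "\<mu> > 0" and "lam < \<mu> + 1"
  shows "alpha_star \<theta> lam \<mu> > 0
    \<and> (\<forall>\<alpha>>0. Profit \<theta> lam \<mu> \<alpha> \<le> Profit \<theta> lam \<mu> (alpha_star \<theta> lam \<mu>))
    \<and> (\<forall>\<alpha>>0. Profit \<theta> lam \<mu> \<alpha> = Profit \<theta> lam \<mu> (alpha_star \<theta> lam \<mu>) \<longrightarrow> \<alpha> = alpha_star \<theta> lam \<mu>)
    \<and> (\<forall>\<alpha>>0. \<exists>d\<ge>0. Profit \<theta> lam \<mu> \<alpha> = profit \<theta> lam \<mu> \<alpha> d
                      \<and> (\<forall>d'\<ge>0. profit \<theta> lam \<mu> \<alpha> d' \<le> profit \<theta> lam \<mu> \<alpha> d))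
    \<and> \<mu> + (1 / lam) * (1 - lam) = 1 / lam + \<mu> + 1 - 2 * sqrt (lam * (1 / lam))"
proof -
  define A where "A = alpha_star \<theta> lam \<mu>"
  have Ap: "A > 0" using pos[OF assms] A_def by simp
  have PA: "Profit \<theta> lam \<mu> A = A * A - A^2/2" using Profit_eq(1)[OF assms(1,2) Ap] A_def by simp
  have diff: "Profit \<theta> lam \<mu> A - Profit \<theta> lam \<mu> \<alpha> = (\<alpha> - A)^2 / 2" if "\<alpha> > 0" for \<alpha>
    using Profit_eq(1)[OF assms(1,2) that] PA A_def by (simp add: power2_eq_square field_simps)
  have c2: "\<forall>\<alpha>>0. Profit \<theta> lam \<mu> \<alpha> \<le> Profit \<theta> lam \<mu> A"
  proof (intro allI impI)
    fix \<alpha> :: real assume "\<alpha> > 0"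
    have "(\<alpha> - A)^2 / 2 \<ge> 0" by simp
    thus "Profit \<theta> lam \<mu> \<alpha> \<le> Profit \<theta> lam \<mu> A" using diff[OF \<open>\<alpha> > 0\<close>] by linarith
  qed
  have c3: "\<forall>\<alpha>>0. Profit \<theta> lam \<mu> \<alpha> = Profit \<theta> lam \<mu> A \<longrightarrow> \<alpha> = A"
  proof (intro allI impI)
    fix \<alpha> :: real assume "\<alpha> > 0" "Profit \<theta> lam \<mu> \<alpha> = Profit \<theta> lam \<mu> A"
    hence "(\<alpha> - A)^2 = 0" using diff[OF \<open>\<alpha> > 0\<close>] by simp
    thus "\<alpha> = A" by simp
  qed
  have c5: "\<mu> + (1 / lam) * (1 - lam) = 1 / lam + \<mu> + 1 - 2 * sqrt (lam * (1 / lam))"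
    using assms by (simp add: field_simps)
  show ?thesis using Ap c2 c3 c5 Profit_eq(2)[OF assms(1,2)] unfolding A_def by blast
qed

end
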